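(* Let $S\in\{0,1\}^{m\times n}$. Then (1) the identity $I\in\mathbb R^{m\times m}$ is $S$-consistent; (2) for any invertible $S$-consistent $C,C'\in\mathbb R^{m\times m}$, the product $CC'$ is $S$-consistent; (3) for any invertible $S$-consistent $C$, the inverse $C^{-1}$ is $S$-consistent. Hence the set of invertible $S$-consistent $m\times m$ matrices is a group under matrix multiplication.
   Context: $S$-consistency: for $S\in\{0,1\}^{m\times n}$, $C\in\mathbb R^{m\times m}$ is $S$-consistent iff for all $i,j$: $[\mathbb 1-S(\mathbb 1-S)^\top]^+_{i,j}=0\Rightarrow C_{i,j}=0$, where $[\cdot]^+=\max\{0,\cdot\}$ entrywise and $\mathbb 1$ is an all-ones matrix of appropriate size. *)

theory Defs
  imports "HOL-Analysis.Analysis"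
begin

definition ones_mat :: "real^'n^'m" where
  "ones_mat = (\<chi> i j. 1)"

definition pos_part_mat :: "real^'n^'m \<Rightarrow> real^'n^'m" where
  "pos_part_mat A = (\<chi> i j. max 0 (A $ i $ j))"

definition s_consistent :: "real^'n^'m \<Rightarrow> real^'m^'m \<Rightarrow> bool" where
  "s_consistent S C \<longleftrightarrow>
     (\<forall>i j. pos_part_mat ((ones_mat :: real^'m^'m) - S ** transpose ((ones_mat :: real^'n^'m) - S)) $ i $ j = 0
            \<longrightarrow> C $ i $ j = 0)"

end

theory Submission
  imports Defs
begin

lemma entry_eq:
  fixes S :: "real^'n^'m"
  assumes S01: "\<forall>i j. S $ i $ j \<in> {0, 1}"
  shows "pos_part_mat ((ones_mat :: real^'m^'m) - S ** transpose ((ones_mat :: real^'n^'m) - S)) $ i $ j = 0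
     \<longleftrightarrow> \<not> (\<forall>k. S$i$k = 1 \<longrightarrow> S$j$k = 1)"
proof -
  have e: "pos_part_mat ((ones_mat :: real^'m^'m) - S ** transpose ((ones_mat :: real^'n^'m) - S)) $ i $ j
      = max 0 (1 - (\<Sum>k\<in>UNIV. S$i$k * (1 - S$j$k)))"
    by (simp add: pos_part_mat_def ones_mat_def matrix_matrix_mult_def transpose_def)
  have nn: "\<And>k. S$i$k * (1 - S$j$k) \<ge> 0" using S01 by (metis insert_iff singletonD mult_nonneg_nonneg order_refl diff_self diff_zero zero_le_one mult_zero_left)
  show ?thesis
  proof (cases "\<forall>k. S$i$k = 1 \<longrightarrow> S$j$k = 1")
    case True
    have "\<And>k. S$i$k * (1 - S$j$k) = 0" using True S01 by (metis insert_iff singletonD mult_zero_left diff_self mult_zero_right)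
    then have "(\<Sum>k\<in>UNIV. S$i$k * (1 - S$j$k)) = 0" by (simp add: sum.neutral)
    then show ?thesis using True e by simp
  next
    case False
    then obtain k where k: "S$i$k = 1" "S$j$k \<noteq> 1" by auto
    then have "S$j$k = 0" using S01 by auto
    then have "S$i$k * (1 - S$j$k) = 1" using k by simp
    moreover have "S$i$k * (1 - S$j$k) \<le> (\<Sum>k\<in>UNIV. S$i$k * (1 - S$j$k))"
      by (rule member_le_sum) (use nn in auto)
    ultimately show ?thesis using False e by simp
  qed
qed

lemma cons_iff:
  fixes S :: "real^'n^'m"
  assumes S01: "\<forall>i j. S $ i $ j \<in> {0, 1}"
  shows "s_consistent S C \<longleftrightarrow> (\<forall>i j. C$i$j \<noteq> 0 \<longrightarrow> (\<forall>k. S$i$k = 1 \<longrightarrow> S$j$k = 1))"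
  unfolding s_consistent_def using entry_eq[OF S01] by blast

theorem mainTheorem5:
  fixes S :: "real^'n^'m"
  assumes "\<forall>i j. S $ i $ j \<in> {0, 1}"
  shows "s_consistent S (mat 1 :: real^'m^'m)
    \<and> (\<forall>C C' :: real^'m^'m. invertible C \<and> invertible C' \<and> s_consistent S C \<and> s_consistent S C'
            \<longrightarrow> s_consistent S (C ** C'))
    \<and> (\<forall>C :: real^'m^'m. invertible C \<and> s_consistent S C \<longrightarrow> s_consistent S (matrix_inv C))"
proof -
  define P where "P i j \<longleftrightarrow> (\<forall>k. S$i$k = 1 \<longrightarrow> S$j$k = 1)" for i j
  define A where "A = {C :: real^'m^'m. \<forall>i j. C$i$j \<noteq> 0 \<longrightarrow> P i j}"
  have cA: "s_consistent S C \<longleftrightarrow> C \<in> A" for C :: "real^'m^'m"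
    using cons_iff[OF assms] unfolding A_def P_def by simp
  have idA: "mat 1 \<in> A" unfolding A_def P_def by (simp add: mat_def)
  have mulA: "C ** D \<in> A" if "C \<in> A" "D \<in> A" for C D
  proof -
    { fix i j assume nz: "(C ** D)$i$j \<noteq> 0"
      then have "(\<Sum>k\<in>UNIV. C$i$k * D$k$j) \<noteq> 0" by (simp add: matrix_matrix_mult_def)
      then obtain k where "C$i$k * D$k$j \<noteq> 0" by (meson sum.neutral)
      then have "P i k" "P k j" using that unfolding A_def by auto
      then have "P i j" unfolding P_def by blast }
    then show ?thesis unfolding A_def by blast
  qed
  have subA: "subspace A" unfolding subspace_def A_def by (auto, metis add.right_neutral)
  have invA: "matrix_inv C \<in> A" if C: "invertible C" "C \<in> A" for C
  proof -
    define f where "f X = C ** X" for X :: "real^'m^'m"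
    have lin: "linear f" unfolding f_def
      by (rule linearI) (simp_all add: matrix_add_ldistrib sum.distrib matrix_matrix_mult_def vec_eq_iff sum_distrib_left algebra_simps)
    obtain Ci where Ci: "C ** Ci = mat 1" "Ci ** C = mat 1" using C(1) unfolding invertible_def by blast
    have inj: "inj_on f (span A)" unfolding f_def inj_on_def
      by (metis Ci(2) matrix_mul_assoc matrix_mul_lid)
    have img: "f ` A \<subseteq> A" unfolding f_def using mulA C(2) by auto
    have "dim (f ` A) = dim A" using dim_image_eq[OF lin inj] .
    then have "f ` A = A" using subspace_dim_equal[OF linear_subspace_image[OF lin subA] subA img] by simp
    then obtain X where X: "X \<in> A" "C ** X = mat 1" using idA unfolding f_def by force
    have "X = Ci" by (metis Ci(2) X(2) matrix_mul_assoc matrix_mul_lid matrix_mul_rid)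
    have "matrix_inv C = X" unfolding matrix_inv_def
    proof (rule some_equality)
      show "C ** X = mat 1 \<and> X ** C = mat 1" using X(2) matrix_left_right_inverse by blast
      fix Y assume "C ** Y = mat 1 \<and> Y ** C = mat 1"
      then show "Y = X" by (metis X(2) matrix_mul_assoc matrix_mul_lid matrix_mul_rid)
    qed
    then show ?thesis using X by simp
  qed
  show ?thesis using idA mulA invA cA by blast
qed

end
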